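(* Let $\mathcal{M}$ be an $\mathbb{A}$-submodule of $\mathbb{A}^K$, $a_1,\dots,a_K\in\mathbb{Z}^n$ and $I,J\subseteq\{1,\dots,K\}$. Suppose that for every $v\in\mathbb{R}^n\setminus\{0\}$ there exists $\boldsymbol f_v\in\mathcal{M}$ with $\mathrm{in}_v(\boldsymbol f_v)\in(\mathbb{A}^+)^K$ and such that, writing $I'=M_v(I,\boldsymbol f_v)$ and $J'=O_v\cup J$, $(O_w\cup J')\cap M_w(I',\mathrm{in}_v(\boldsymbol f_v))\ne\emptyset$ for all $w\in\mathbb{R}^n\setminus\{0\}$. Then there exists $\boldsymbol f\in\mathcal{M}$ such that (i) $\mathrm{in}_v(\boldsymbol f)\in(\mathbb{A}^+)^K$ for all $v\in\mathbb{R}^n\setminus\{0\}$, and (ii) $(O_v\cup J)\cap M_v(I,\boldsymbol f)\ne\emptyset$ for all $v\in\mathbb{R}^n\setminus\{0\}$.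
   Context: $\mathbb{A}=\mathbb{R}[X_1^{\pm1},\dots,X_n^{\pm1}]$, $\mathbb{A}^+=\mathbb{R}_{\ge0}[X_1^{\pm1},\dots,X_n^{\pm1}]\setminus\{0\}$. For $f=\sum c_bX^b\ne0$: $\deg_v(f)=\max\{v\cdot b:c_b\neq0\}$, $\deg_v(0)=-\infty$, $\mathrm{in}_v(f)=\sum_{v\cdot b=\deg_v f}c_bX^b$, componentwise on vectors. $M_v(I,\boldsymbol f)=\{i\in I:\deg_v(f_i)=\max_{i'\in I}\deg_v(f_{i'})\}$; $O_v=\{i:a_i\not\perp v\}$. *)

theory Defs
  imports "HOL-Analysis.Analysis" "HOL-Library.Poly_Mapping" "HOL-Library.Extended_Real"
begin

text \<open>Multiplication is the
  convolution product, so this is the ring A = R[X_1^{+-1},...,X_n^{+-1}].\<close>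
type_synonym 'n laurent = "(int ^ 'n) \<Rightarrow>\<^sub>0 real"

definition expvec :: "int ^ 'n \<Rightarrow> real ^ 'n" where
  "expvec b = (\<chi> i. real_of_int (b $ i))"

definition ldeg :: "real ^ 'n::finite \<Rightarrow> 'n laurent \<Rightarrow> ereal" where
  "ldeg v f = (if f = 0 then -\<infinity>
     else ereal (Max ((\<lambda>b. v \<bullet> expvec b) ` Poly_Mapping.keys f)))"

definition linit :: "real ^ 'n::finite \<Rightarrow> 'n laurent \<Rightarrow> 'n laurent" where
  "linit v f = Abs_poly_mapping
     (\<lambda>b. if ereal (v \<bullet> expvec b) = ldeg v f then Poly_Mapping.lookup f b else 0)"

definition linitv :: "real ^ 'n::finite \<Rightarrow> ('k \<Rightarrow> 'n laurent) \<Rightarrow> ('k \<Rightarrow> 'n laurent)" where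
  "linitv v f = (\<lambda>i. linit v (f i))"

definition Aplus :: "'n laurent set" where
  "Aplus = {f. f \<noteq> 0 \<and> (\<forall>b. Poly_Mapping.lookup f b \<ge> 0)}"

definition Mset :: "real ^ 'n::finite \<Rightarrow> 'k set \<Rightarrow> ('k \<Rightarrow> 'n laurent) \<Rightarrow> 'k set" where
  "Mset v I f = {i \<in> I. ldeg v (f i) = Max ((\<lambda>i'. ldeg v (f i')) ` I)}"

definition Oset :: "('k \<Rightarrow> int ^ 'n::finite) \<Rightarrow> real ^ 'n \<Rightarrow> 'k set" where
  "Oset a v = {i. expvec (a i) \<bullet> v \<noteq> 0}"

definition is_submodule :: "('k \<Rightarrow> ('n::finite) laurent) set \<Rightarrow> bool" where
  "is_submodule M \<longleftrightarrow> (\<lambda>_. 0) \<in> M \<and>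
     (\<forall>f\<in>M. \<forall>g\<in>M. (\<lambda>i. f i + g i) \<in> M) \<and>
     (\<forall>c. \<forall>f\<in>M. (\<lambda>i. c * f i) \<in> M)"

end

theory Submission
  imports Defs
begin


definition rdeg :: "real ^ 'n::finite \<Rightarrow> 'n laurent \<Rightarrow> real" where
  "rdeg u g = Max ((\<lambda>b. u \<bullet> expvec b) ` Poly_Mapping.keys g)"

definition ptop :: "real ^ 'n::finite \<Rightarrow> 'n laurent \<Rightarrow> bool" where
  "ptop u g \<longleftrightarrow> g \<noteq> 0 \<and> (\<forall>b\<in>Poly_Mapping.keys g. u \<bullet> expvec b = rdeg u g \<longrightarrow> 0 < Poly_Mapping.lookup g b)"

lemma rdeg_ge: "b \<in> Poly_Mapping.keys g \<Longrightarrow> u \<bullet> expvec b \<le> rdeg u g"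
  unfolding rdeg_def by (rule Max_ge) auto

lemma rdeg_attained: "g \<noteq> 0 \<Longrightarrow> \<exists>b\<in>Poly_Mapping.keys g. u \<bullet> expvec b = rdeg u g"
proof -
  assume "g \<noteq> 0"
  then have "Poly_Mapping.keys g \<noteq> {}" by simp
  then have "rdeg u g \<in> (\<lambda>b. u \<bullet> expvec b) ` Poly_Mapping.keys g"
    unfolding rdeg_def by (intro Max_in) auto
  then show ?thesis by auto
qed

lemma ldeg_eq: "g \<noteq> 0 \<Longrightarrow> ldeg u g = ereal (rdeg u g)"
  by (simp add: ldeg_def rdeg_def)

lemma lookup_linit:
  "Poly_Mapping.lookup (linit u g) b = (if g \<noteq> 0 \<and> u \<bullet> expvec b = rdeg u g then Poly_Mapping.lookup g b else 0)"
proof -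
  let ?h = "\<lambda>b. if ereal (u \<bullet> expvec b) = ldeg u g then Poly_Mapping.lookup g b else 0"
  have "finite {x. ?h x \<noteq> 0}"
    by (rule finite_subset[of _ "Poly_Mapping.keys g"]) (auto simp: in_keys_iff split: if_splits)
  then have "Poly_Mapping.lookup (linit u g) = ?h" unfolding linit_def by simp
  then show ?thesis by (cases "g = 0") (auto simp: ldeg_def rdeg_def)
qed

lemma linit_Aplus_iff: "linit u g \<in> Aplus \<longleftrightarrow> ptop u g"
proof
  assume A: "linit u g \<in> Aplus"
  have g0: "g \<noteq> 0"
  proof
    assume "g = 0"
    then have "linit u g = 0"
      by (metis lookup_linit lookup_zero poly_mapping_eqI)
    with A show False by (simp add: Aplus_def)
  qed
  show "ptop u g" unfolding ptop_def
  proof (intro conjI ballI impI g0)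
    fix b assume b: "b \<in> Poly_Mapping.keys g" "u \<bullet> expvec b = rdeg u g"
    have "0 \<le> Poly_Mapping.lookup (linit u g) b" using A by (simp add: Aplus_def)
    then have "0 \<le> Poly_Mapping.lookup g b" using b g0 by (simp add: lookup_linit)
    moreover have "Poly_Mapping.lookup g b \<noteq> 0" using b by (simp add: in_keys_iff)
    ultimately show "0 < Poly_Mapping.lookup g b" by simp
  qed
next
  assume P: "ptop u g"
  then obtain b where b: "b \<in> Poly_Mapping.keys g" "u \<bullet> expvec b = rdeg u g"
    using rdeg_attained by (metis ptop_def)
  have "Poly_Mapping.lookup (linit u g) b \<noteq> 0"
    using P b by (auto simp: lookup_linit ptop_def)
  then have "linit u g \<noteq> 0" by auto
  moreover have "\<forall>c. 0 \<le> Poly_Mapping.lookup (linit u g) c"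
  proof
    fix c
    show "0 \<le> Poly_Mapping.lookup (linit u g) c"
    proof (cases "c \<in> Poly_Mapping.keys g")
      case True then show ?thesis using P by (auto simp: lookup_linit ptop_def less_imp_le)
    next
      case False then show ?thesis by (auto simp: lookup_linit in_keys_iff)
    qed
  qed
  ultimately show "linit u g \<in> Aplus" by (simp add: Aplus_def)
qed

lemma Mset_real:
  fixes f :: "'k::finite \<Rightarrow> 'n::finite laurent"
  assumes "\<forall>i\<in>I. f i \<noteq> 0"
  shows "Mset u I f = {i\<in>I. rdeg u (f i) = Max ((\<lambda>i. rdeg u (f i)) ` I)}"
proof (cases "I = {}")
  case True then show ?thesis by (simp add: Mset_def)
next
  case False
  have "(\<lambda>i. ldeg u (f i)) ` I = ereal ` ((\<lambda>i. rdeg u (f i)) ` I)"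
    using assms by (auto simp: ldeg_eq image_image)
  moreover have "Max (ereal ` ((\<lambda>i. rdeg u (f i)) ` I)) = ereal (Max ((\<lambda>i. rdeg u (f i)) ` I))"
    using False by (intro mono_Max_commute[symmetric]) (auto simp: mono_def)
  ultimately show ?thesis using assms by (auto simp: Mset_def ldeg_eq)
qed

lemma expvec_diff: "expvec (b - p) = expvec b - expvec p"
  by (simp add: expvec_def vec_eq_iff)

lemma expvec_add: "expvec (b + p) = expvec b + expvec p"
  by (simp add: expvec_def vec_eq_iff)

definition good :: "'k set \<Rightarrow> 'k set \<Rightarrow> ('k \<Rightarrow> int ^ 'n) \<Rightarrow> ('k::finite \<Rightarrow> 'n::finite laurent) \<Rightarrow> real ^ 'n \<Rightarrow> bool" where
  "good I J a f u \<longleftrightarrow> (\<forall>i. ptop u (f i)) \<and>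
     (Oset a u \<union> J) \<inter> {i\<in>I. rdeg u (f i) = Max ((\<lambda>i. rdeg u (f i)) ` I)} \<noteq> {}"

lemma local_good:
  fixes f :: "'k::finite \<Rightarrow> 'n::finite laurent"
  assumes pv: "\<forall>i. ptop v (f i)"
    and H: "\<forall>w. w \<noteq> 0 \<longrightarrow> (Oset a w \<union> (Oset a v \<union> J)) \<inter> Mset w (Mset v I f) (linitv v f) \<noteq> {}"
    and u0: "u \<noteq> 0"
    and P: "\<forall>i j b b'. b \<in> Poly_Mapping.keys (f i) \<longrightarrow> b' \<in> Poly_Mapping.keys (f j) \<longrightarrow>
              v \<bullet> expvec b < v \<bullet> expvec b' \<longrightarrow> u \<bullet> expvec b < u \<bullet> expvec b'"
    and O: "Oset a v \<subseteq> Oset a u"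
  shows "good I J a f u"
proof -
  have f0: "\<And>i. f i \<noteq> 0" using pv by (simp add: ptop_def)
  have A: "v \<bullet> expvec b = rdeg v (f i)"
    if b: "b \<in> Poly_Mapping.keys (f i)" "u \<bullet> expvec b = rdeg u (f i)" for i b
  proof (rule ccontr)
    assume ne: "v \<bullet> expvec b \<noteq> rdeg v (f i)"
    obtain b0 where b0: "b0 \<in> Poly_Mapping.keys (f i)" "v \<bullet> expvec b0 = rdeg v (f i)"
      using rdeg_attained f0 by blast
    have "v \<bullet> expvec b < v \<bullet> expvec b0" using rdeg_ge[OF b(1), of v] ne b0 by linarith
    then have "u \<bullet> expvec b < u \<bullet> expvec b0" using P b(1) b0(1) by blast
    with rdeg_ge[OF b0(1), of u] b(2) show False by linarith
  qed
  have pu: "ptop u (f i)" for i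
    using pv A f0 unfolding ptop_def by metis
  have keysl: "Poly_Mapping.keys (linit v (f i)) = {b \<in> Poly_Mapping.keys (f i). v \<bullet> expvec b = rdeg v (f i)}" for i
    using f0 by (auto simp: in_keys_iff lookup_linit split: if_splits)
  have B: "rdeg u (linit v (f i)) = rdeg u (f i)" for i
  proof -
    obtain b where b: "b \<in> Poly_Mapping.keys (f i)" "u \<bullet> expvec b = rdeg u (f i)"
      using rdeg_attained f0 by blast
    show ?thesis unfolding rdeg_def[of u "linit v (f i)"]
    proof (rule Max_eqI)
      show "finite ((\<lambda>b. u \<bullet> expvec b) ` Poly_Mapping.keys (linit v (f i)))" by simp
      show "y \<le> rdeg u (f i)" if "y \<in> (\<lambda>b. u \<bullet> expvec b) ` Poly_Mapping.keys (linit v (f i))" for y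
        using that keysl rdeg_ge by fastforce
      show "rdeg u (f i) \<in> (\<lambda>b. u \<bullet> expvec b) ` Poly_Mapping.keys (linit v (f i))"
        using b A keysl by force
    qed
  qed
  have l0: "linit v (f i) \<noteq> 0" for i
    using pv linit_Aplus_iff[of v "f i"] by (auto simp: Aplus_def)
  have C: "rdeg u (f i) < rdeg u (f j)" if "rdeg v (f i) < rdeg v (f j)" for i j
  proof -
    obtain b where b: "b \<in> Poly_Mapping.keys (f i)" "u \<bullet> expvec b = rdeg u (f i)"
      using rdeg_attained f0 by blast
    obtain b0 where b0: "b0 \<in> Poly_Mapping.keys (f j)" "v \<bullet> expvec b0 = rdeg v (f j)"
      using rdeg_attained f0 by blast
    have "v \<bullet> expvec b < v \<bullet> expvec b0" using rdeg_ge[OF b(1), of v] that b0 by linarith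
    then have "u \<bullet> expvec b < u \<bullet> expvec b0" using P b(1) b0(1) by blast
    with rdeg_ge[OF b0(1), of u] b(2) show ?thesis by linarith
  qed
  define I' where "I' = Mset v I f"
  have I'r: "I' = {i\<in>I. rdeg v (f i) = Max ((\<lambda>i. rdeg v (f i)) ` I)}"
    unfolding I'_def using Mset_real f0 by blast
  have MM: "Mset u I' (linitv v f) = {i\<in>I. rdeg u (f i) = Max ((\<lambda>i. rdeg u (f i)) ` I)}"
  proof (cases "I = {}")
    case True then show ?thesis by (simp add: Mset_def I'r)
  next
    case False
    have finI: "finite I" by simp
    have "Max ((\<lambda>i. rdeg u (f i)) ` I) \<in> (\<lambda>i. rdeg u (f i)) ` I"
      using False by (intro Max_in) auto
    then obtain i0 where i0: "i0 \<in> I" "rdeg u (f i0) = Max ((\<lambda>i. rdeg u (f i)) ` I)"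
      by force
    have inI': "i \<in> I'" if "i \<in> I" "rdeg u (f i) = Max ((\<lambda>i. rdeg u (f i)) ` I)" for i
    proof (rule ccontr)
      assume "i \<notin> I'"
      have "Max ((\<lambda>i. rdeg v (f i)) ` I) \<in> (\<lambda>i. rdeg v (f i)) ` I"
        using False by (intro Max_in) auto
      then obtain j where j: "j \<in> I" "rdeg v (f j) = Max ((\<lambda>i. rdeg v (f i)) ` I)"
        by force
      have "rdeg v (f i) \<le> rdeg v (f j)" using j that(1) by simp
      moreover have "rdeg v (f i) \<noteq> rdeg v (f j)" using \<open>i \<notin> I'\<close> that(1) j I'r by auto
      ultimately have "rdeg u (f i) < rdeg u (f j)" using C by simp
      moreover have "rdeg u (f j) \<le> rdeg u (f i)" using that j(1) by simp
      ultimately show False by simp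
    qed
    have sub: "I' \<subseteq> I" using I'r by auto
    have mx: "Max ((\<lambda>i. rdeg u (f i)) ` I') = Max ((\<lambda>i. rdeg u (f i)) ` I)"
    proof (rule Max_eqI)
      show "finite ((\<lambda>i. rdeg u (f i)) ` I')" by simp
      show "y \<le> Max ((\<lambda>i. rdeg u (f i)) ` I)" if "y \<in> (\<lambda>i. rdeg u (f i)) ` I'" for y
        using that sub by auto
      show "Max ((\<lambda>i. rdeg u (f i)) ` I) \<in> (\<lambda>i. rdeg u (f i)) ` I'"
        using i0 inI' by (metis image_eqI)
    qed
    have "Mset u I' (linitv v f) = {i\<in>I'. rdeg u (f i) = Max ((\<lambda>i. rdeg u (f i)) ` I')}"
      using Mset_real[of I' "linitv v f" u] l0 B by (simp add: linitv_def)
    then show ?thesis using mx inI' sub by auto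
  qed
  have "(Oset a u \<union> (Oset a v \<union> J)) \<inter> Mset u I' (linitv v f) \<noteq> {}"
    using H u0 I'_def by blast
  then have "(Oset a u \<union> J) \<inter> {i\<in>I. rdeg u (f i) = Max ((\<lambda>i. rdeg u (f i)) ` I)} \<noteq> {}"
    using MM O by auto
  then show ?thesis using pu by (simp add: good_def)
qed



lemma local_nbhd:
  fixes f :: "'k::finite \<Rightarrow> 'n::finite laurent" and a :: "'k \<Rightarrow> int ^ 'n"
  assumes v0: "v \<noteq> 0"
  shows "\<exists>\<epsilon>>0. \<forall>u. dist u v < \<epsilon> \<longrightarrow> u \<noteq> 0 \<and>
     (\<forall>i j b b'. b \<in> Poly_Mapping.keys (f i) \<longrightarrow> b' \<in> Poly_Mapping.keys (f j) \<longrightarrow>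
              v \<bullet> expvec b < v \<bullet> expvec b' \<longrightarrow> u \<bullet> expvec b < u \<bullet> expvec b') \<and>
     (\<forall>i. expvec (a i) \<bullet> v \<noteq> 0 \<longrightarrow> expvec (a i) \<bullet> u \<noteq> 0)"
proof -
  define K where "K = (\<Union>i. Poly_Mapping.keys (f i))"
  have finK: "finite K" unfolding K_def by simp
  have e1: "eventually (\<lambda>u. u \<noteq> 0) (nhds v)"
    using tendsto_imp_eventually_ne[OF filterlim_ident v0] .
  have e2: "eventually (\<lambda>u. \<forall>b\<in>K. \<forall>b'\<in>K. v \<bullet> expvec b < v \<bullet> expvec b' \<longrightarrow> u \<bullet> expvec b < u \<bullet> expvec b') (nhds v)"
  proof (intro eventually_ball_finite finK ballI)
    fix b b' assume "b \<in> K" "b' \<in> K"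
    show "eventually (\<lambda>u. v \<bullet> expvec b < v \<bullet> expvec b' \<longrightarrow> u \<bullet> expvec b < u \<bullet> expvec b') (nhds v)"
    proof (cases "v \<bullet> expvec b < v \<bullet> expvec b'")
      case True
      have "((\<lambda>u. u \<bullet> expvec b' - u \<bullet> expvec b) \<longlongrightarrow> v \<bullet> expvec b' - v \<bullet> expvec b) (nhds v)"
        by (intro tendsto_intros filterlim_ident)
      from order_tendstoD(1)[OF this, of 0] True
      have "eventually (\<lambda>u. 0 < u \<bullet> expvec b' - u \<bullet> expvec b) (nhds v)" by simp
      then show ?thesis by eventually_elim simp
    qed simp
  qed
  have e3: "eventually (\<lambda>u. \<forall>i. expvec (a i) \<bullet> v \<noteq> 0 \<longrightarrow> expvec (a i) \<bullet> u \<noteq> 0) (nhds v)"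
  proof -
    have ev: "\<forall>i. eventually (\<lambda>u. expvec (a i) \<bullet> v \<noteq> 0 \<longrightarrow> expvec (a i) \<bullet> u \<noteq> 0) (nhds v)"
    proof
      fix i
      show "eventually (\<lambda>u. expvec (a i) \<bullet> v \<noteq> 0 \<longrightarrow> expvec (a i) \<bullet> u \<noteq> 0) (nhds v)"
      proof (cases "expvec (a i) \<bullet> v \<noteq> 0")
        case True
        have "((\<lambda>u. expvec (a i) \<bullet> u) \<longlongrightarrow> expvec (a i) \<bullet> v) (nhds v)"
          by (intro tendsto_intros filterlim_ident)
        from tendsto_imp_eventually_ne[OF this True] show ?thesis by eventually_elim simp
      qed simp
    qed
    show ?thesis
      by (rule eventually_all_finite[of "\<lambda>u i. expvec (a i) \<bullet> v \<noteq> 0 \<longrightarrow> expvec (a i) \<bullet> u \<noteq> 0"]) (use ev in blast)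
  qed
  have "eventually (\<lambda>u. u \<noteq> 0 \<and> (\<forall>b\<in>K. \<forall>b'\<in>K. v \<bullet> expvec b < v \<bullet> expvec b' \<longrightarrow> u \<bullet> expvec b < u \<bullet> expvec b')
      \<and> (\<forall>i. expvec (a i) \<bullet> v \<noteq> 0 \<longrightarrow> expvec (a i) \<bullet> u \<noteq> 0)) (nhds v)"
    using e1 e2 e3 by eventually_elim blast
  then obtain \<epsilon> where "\<epsilon> > 0" and H: "\<forall>u. dist u v < \<epsilon> \<longrightarrow> u \<noteq> 0 \<and> (\<forall>b\<in>K. \<forall>b'\<in>K. v \<bullet> expvec b < v \<bullet> expvec b' \<longrightarrow> u \<bullet> expvec b < u \<bullet> expvec b')
      \<and> (\<forall>i. expvec (a i) \<bullet> v \<noteq> 0 \<longrightarrow> expvec (a i) \<bullet> u \<noteq> 0)"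
    unfolding eventually_nhds_metric by blast
  then show ?thesis unfolding K_def by blast
qed

lemma lookup_shift: "Poly_Mapping.lookup (Poly_Mapping.single (p::int^'n) (1::real) * g) b = Poly_Mapping.lookup g (b - p)"
proof -
  have "Poly_Mapping.lookup (Poly_Mapping.single p (1::real) * g) b
     = Sum_any (\<lambda>l. (Sum_any (\<lambda>q. Poly_Mapping.lookup g q when b = l + q) when p = l))"
    by (simp add: lookup_mult lookup_single when_mult)
  also have "\<dots> = Sum_any (\<lambda>q. Poly_Mapping.lookup g q when b = p + q)" by simp
  also have "\<dots> = Sum_any (\<lambda>q. Poly_Mapping.lookup g q when q = b - p)"
    by (rule Sum_any.cong) (auto simp: when_def algebra_simps)
  also have "\<dots> = Poly_Mapping.lookup g (b - p)" by simp
  finally show ?thesis .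
qed

lemma comb:
  fixes G :: "int ^ 'n::finite \<Rightarrow> 'n laurent" and P :: "(int ^ 'n) set"
  defines "F \<equiv> (\<Sum>p\<in>P. Poly_Mapping.single p 1 * G p)"
  assumes finP: "finite P" and Pne: "P \<noteq> {}" and G0: "\<forall>p\<in>P. G p \<noteq> 0"
    and top: "\<forall>p\<in>P. (\<forall>q\<in>P. u \<bullet> expvec q + rdeg u (G q) \<le> u \<bullet> expvec p + rdeg u (G p)) \<longrightarrow> ptop u (G p)"
  shows "F \<noteq> 0 \<and> ptop u F \<and> (\<forall>p\<in>P. u \<bullet> expvec p + rdeg u (G p) \<le> rdeg u F)
     \<and> (\<exists>p\<in>P. rdeg u F = u \<bullet> expvec p + rdeg u (G p))"
proof -
  define \<phi> where "\<phi> q = u \<bullet> expvec q + rdeg u (G q)" for q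
  have "Max (\<phi> ` P) \<in> \<phi> ` P" using finP Pne by (intro Max_in) auto
  then obtain p0 where p0: "p0 \<in> P" "\<phi> p0 = Max (\<phi> ` P)" by force
  have p0max: "\<forall>q\<in>P. \<phi> q \<le> \<phi> p0" using p0 finP by simp
  define T where "T = \<phi> p0"
  have lk: "Poly_Mapping.lookup F b = (\<Sum>p\<in>P. Poly_Mapping.lookup (G p) (b - p))" for b
    unfolding F_def by (simp add: lookup_sum lookup_shift)
  have dotsplit: "u \<bullet> expvec b = u \<bullet> expvec p + u \<bullet> expvec (b - p)" for b p
    by (simp add: expvec_diff inner_diff_right)
  have keys_le: "u \<bullet> expvec b \<le> T" if "b \<in> Poly_Mapping.keys F" for b
  proof -
    have "(\<Sum>p\<in>P. Poly_Mapping.lookup (G p) (b - p)) \<noteq> 0" using that lk by (simp add: in_keys_iff)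
    then obtain p where p: "p \<in> P" "Poly_Mapping.lookup (G p) (b - p) \<noteq> 0"
      by (meson sum.not_neutral_contains_not_neutral)
    then have "u \<bullet> expvec (b - p) \<le> rdeg u (G p)" by (intro rdeg_ge) (simp add: in_keys_iff)
    then have "u \<bullet> expvec b \<le> \<phi> p" using dotsplit[of b p] by (simp add: \<phi>_def)
    then show ?thesis using p0max p(1) T_def by force
  qed
  have nonneg: "0 \<le> Poly_Mapping.lookup (G p) (b - p)" if "u \<bullet> expvec b = T" "p \<in> P" for b p
  proof (cases "Poly_Mapping.lookup (G p) (b - p) = 0")
    case False
    then have k: "b - p \<in> Poly_Mapping.keys (G p)" by (simp add: in_keys_iff)
    then have le: "u \<bullet> expvec (b - p) \<le> rdeg u (G p)" by (rule rdeg_ge)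
    then have "T \<le> \<phi> p" using dotsplit[of b p] that by (simp add: \<phi>_def)
    then have eq: "\<phi> p = T" using p0max that T_def by force
    then have "\<forall>q\<in>P. \<phi> q \<le> \<phi> p" using p0max T_def by simp
    then have "ptop u (G p)" using top that(2) by (simp add: \<phi>_def)
    moreover have "u \<bullet> expvec (b - p) = rdeg u (G p)" using eq dotsplit[of b p] that(1) by (simp add: \<phi>_def)
    ultimately show ?thesis using k by (simp add: ptop_def less_imp_le)
  qed simp
  obtain b0 where b0: "b0 \<in> Poly_Mapping.keys (G p0)" "u \<bullet> expvec b0 = rdeg u (G p0)"
    using rdeg_attained G0 p0(1) by blast
  define bs where "bs = b0 + p0"
  have bsT: "u \<bullet> expvec bs = T" unfolding bs_def T_def \<phi>_def using b0(2) by (simp add: expvec_add inner_add_right)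
  have "ptop u (G p0)" using top p0(1) p0max by (simp add: \<phi>_def)
  then have pos0: "0 < Poly_Mapping.lookup (G p0) (bs - p0)" using b0 by (simp add: bs_def ptop_def)
  have "0 < Poly_Mapping.lookup F bs"
    unfolding lk by (rule sum_pos2[of P p0 "\<lambda>p. Poly_Mapping.lookup (G p) (bs - p)"]) (use finP p0(1) pos0 nonneg bsT in auto)
  then have bsk: "bs \<in> Poly_Mapping.keys F" by (simp add: in_keys_iff)
  then have F0: "F \<noteq> 0" by auto
  have rF: "rdeg u F = T" unfolding rdeg_def
    by (rule Max_eqI) (use keys_le bsk bsT in auto)
  have "ptop u F" unfolding ptop_def
  proof (intro conjI F0 ballI impI)
    fix b assume "b \<in> Poly_Mapping.keys F" "u \<bullet> expvec b = rdeg u F"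
    then have "0 \<le> Poly_Mapping.lookup F b" "Poly_Mapping.lookup F b \<noteq> 0"
      using nonneg rF lk by (auto intro: sum_nonneg simp: in_keys_iff)
    then show "0 < Poly_Mapping.lookup F b" by simp
  qed
  then show ?thesis using F0 rF p0max p0(1) T_def by (auto simp: \<phi>_def)
qed

lemma submodule_sum:
  assumes M: "is_submodule M" and fin: "finite P" and h: "\<forall>p\<in>P. h p \<in> M"
  shows "(\<lambda>i. \<Sum>p\<in>P. c p * h p i) \<in> M"
  using fin h
proof (induction P rule: finite_induct)
  case empty then show ?case using M by (simp add: is_submodule_def)
next
  case (insert x F)
  have "(\<lambda>i. c x * h x i) \<in> M" using M insert by (simp add: is_submodule_def)
  moreover have "(\<lambda>i. \<Sum>p\<in>F. c p * h p i) \<in> M" using insert by simp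
  moreover have add: "\<And>f g. f \<in> M \<Longrightarrow> g \<in> M \<Longrightarrow> (\<lambda>i. f i + g i) \<in> M"
    using M unfolding is_submodule_def by blast
  ultimately have "(\<lambda>i. c x * h x i + (\<Sum>p\<in>F. c p * h p i)) \<in> M"
    by (metis (no_types) add)
  then show ?case using insert by simp
qed

lemma finite_bounded_intvec:
  "finite {p :: int ^ 'n::finite. \<forall>i. \<bar>p $ i\<bar> \<le> m}"
proof -
  have "vec_nth ` {p :: int ^ 'n. \<forall>i. \<bar>p $ i\<bar> \<le> m} \<subseteq> PiE UNIV (\<lambda>_. {-m..m})"
    by (auto simp: PiE_def extensional_def abs_le_iff) (metis minus_le_iff)
  moreover have "finite (PiE (UNIV :: 'n set) (\<lambda>_. {-m..m}))" by (intro finite_PiE) auto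
  ultimately have "finite (vec_nth ` {p :: int ^ 'n. \<forall>i. \<bar>p $ i\<bar> \<le> m})" by (rule finite_subset)
  moreover have "inj (vec_nth :: int ^ 'n \<Rightarrow> _)" by (simp add: inj_def vec_eq_iff)
  ultimately show ?thesis by (meson finite_imageD inj_on_subset subset_UNIV)
qed



lemma gap_ineq:
  fixes u w :: "real ^ 'n::finite"
  assumes u0: "u \<noteq> 0" and w0: "w \<noteq> 0" and e0: "e > 0"
    and lo: "R - d \<le> norm w" and hi: "norm w \<le> R + d"
    and far: "e \<le> dist (w /\<^sub>R norm w) (u /\<^sub>R norm u)"
  shows "u \<bullet> w \<le> norm u * (R + d - (R - d) * e\<^sup>2 / 2)"
proof -
  define uh where "uh = u /\<^sub>R norm u"
  define wh where "wh = w /\<^sub>R norm w"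
  have nuh: "uh \<bullet> uh = 1" unfolding uh_def using u0
    by (simp add: power2_norm_eq_inner[symmetric] field_simps power2_eq_square)
  have nwh: "wh \<bullet> wh = 1" unfolding wh_def using w0
    by (simp add: power2_norm_eq_inner[symmetric] field_simps power2_eq_square)
  have "(norm (wh - uh))\<^sup>2 = wh \<bullet> wh - 2 * (uh \<bullet> wh) + uh \<bullet> uh"
    by (simp add: power2_norm_eq_inner inner_diff_left inner_diff_right inner_commute)
  then have dsq: "(dist wh uh)\<^sup>2 = 2 - 2 * (uh \<bullet> wh)" using nuh nwh by (simp add: dist_norm)
  have "e\<^sup>2 \<le> (dist wh uh)\<^sup>2" using far e0 unfolding uh_def wh_def by (intro power_mono) auto
  then have s: "uh \<bullet> wh \<le> 1 - e\<^sup>2 / 2" using dsq by simp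
  have uw: "u \<bullet> w = norm u * (norm w * (uh \<bullet> wh))" unfolding uh_def wh_def using u0 w0
    by (simp add: inner_scaleR_left inner_scaleR_right field_simps)
  have "norm w * (uh \<bullet> wh) \<le> norm w * (1 - e\<^sup>2 / 2)" using s by (intro mult_left_mono) auto
  also have "\<dots> = norm w - norm w * e\<^sup>2 / 2" by (simp add: algebra_simps)
  also have "\<dots> \<le> R + d - (R - d) * e\<^sup>2 / 2"
  proof -
    have "(R - d) * e\<^sup>2 \<le> norm w * e\<^sup>2" using lo by (intro mult_right_mono) auto
    then show ?thesis using hi by simp
  qed
  finally show ?thesis unfolding uw by (intro mult_left_mono) auto
qed

lemma round_vec:
  fixes x :: "real ^ 'n::finite"
  shows "norm (expvec ((\<chi> j. round (x $ j)) :: int ^ 'n) - x) \<le> real CARD('n)"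
proof -
  have "norm (expvec ((\<chi> j. round (x $ j)) :: int ^ 'n) - x) \<le> (\<Sum>j\<in>UNIV. \<bar>(expvec ((\<chi> j. round (x $ j)) :: int ^ 'n) - x) $ j\<bar>)"
    by (rule norm_le_l1_cart)
  also have "\<dots> \<le> of_nat (card (UNIV :: 'n set)) * 1"
  proof (rule sum_bounded_above)
    fix j :: 'n
    have "\<bar>real_of_int (round (x $ j)) - x $ j\<bar> \<le> 1/2" by (rule of_int_round_abs_le)
    then show "\<bar>(expvec ((\<chi> j. round (x $ j)) :: int ^ 'n) - x) $ j\<bar> \<le> 1"
      by (simp add: expvec_def)
  qed
  finally show ?thesis by simp
qed



theorem mainTheorem12:
  fixes M :: "('k::finite \<Rightarrow> ('n::finite) laurent) set"
    and a :: "'k \<Rightarrow> int ^ 'n"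
    and I J :: "'k set"
  assumes "is_submodule M"
    and "\<forall>v :: real ^ 'n. v \<noteq> 0 \<longrightarrow>
          (\<exists>fv \<in> M. (\<forall>i. linitv v fv i \<in> Aplus) \<and>
             (\<forall>w :: real ^ 'n. w \<noteq> 0 \<longrightarrow>
                (Oset a w \<union> (Oset a v \<union> J)) \<inter> Mset w (Mset v I fv) (linitv v fv) \<noteq> {}))"
  shows "\<exists>f \<in> M. (\<forall>v :: real ^ 'n. v \<noteq> 0 \<longrightarrow> (\<forall>i. linitv v f i \<in> Aplus)) \<and>
           (\<forall>v :: real ^ 'n. v \<noteq> 0 \<longrightarrow> (Oset a v \<union> J) \<inter> Mset v I f \<noteq> {})"
proof -
  have "\<forall>v. \<exists>fv. v \<noteq> 0 \<longrightarrow> fv \<in> M \<and> (\<forall>i. ptop v (fv i)) \<and>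
             (\<forall>w :: real ^ 'n. w \<noteq> 0 \<longrightarrow>
                (Oset a w \<union> (Oset a v \<union> J)) \<inter> Mset w (Mset v I fv) (linitv v fv) \<noteq> {})"
    using assms(2) by (metis linitv_def linit_Aplus_iff)
  then obtain fs where fs: "\<And>v. v \<noteq> 0 \<Longrightarrow> fs v \<in> M \<and> (\<forall>i. ptop v (fs v i)) \<and>
             (\<forall>w :: real ^ 'n. w \<noteq> 0 \<longrightarrow>
                (Oset a w \<union> (Oset a v \<union> J)) \<inter> Mset w (Mset v I (fs v)) (linitv v (fs v)) \<noteq> {})"
    by metis
  have loc: "\<exists>\<epsilon>>0. \<forall>u t. dist u v < \<epsilon> \<longrightarrow> t > 0 \<longrightarrow> good I J a (fs v) (t *\<^sub>R u)" if v0: "v \<noteq> 0" for v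
  proof -
    obtain \<epsilon> where \<epsilon>: "\<epsilon> > 0" and H: "\<forall>u. dist u v < \<epsilon> \<longrightarrow> u \<noteq> 0 \<and>
     (\<forall>i j b b'. b \<in> Poly_Mapping.keys (fs v i) \<longrightarrow> b' \<in> Poly_Mapping.keys (fs v j) \<longrightarrow>
              v \<bullet> expvec b < v \<bullet> expvec b' \<longrightarrow> u \<bullet> expvec b < u \<bullet> expvec b') \<and>
     (\<forall>i. expvec (a i) \<bullet> v \<noteq> 0 \<longrightarrow> expvec (a i) \<bullet> u \<noteq> 0)"
      using local_nbhd[OF v0, of "fs v" a] by blast
    have "good I J a (fs v) (t *\<^sub>R u)" if "dist u v < \<epsilon>" "t > 0" for u t
    proof (rule local_good)
      show "\<forall>i. ptop v (fs v i)" using fs v0 by blast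
      show "\<forall>w. w \<noteq> 0 \<longrightarrow> (Oset a w \<union> (Oset a v \<union> J)) \<inter> Mset w (Mset v I (fs v)) (linitv v (fs v)) \<noteq> {}"
        using fs v0 by blast
      show "t *\<^sub>R u \<noteq> 0" using H that by auto
      show "\<forall>i j b b'. b \<in> Poly_Mapping.keys (fs v i) \<longrightarrow> b' \<in> Poly_Mapping.keys (fs v j) \<longrightarrow>
              v \<bullet> expvec b < v \<bullet> expvec b' \<longrightarrow> (t *\<^sub>R u) \<bullet> expvec b < (t *\<^sub>R u) \<bullet> expvec b'"
        using H that by (auto simp: inner_scaleR_left)
      show "Oset a v \<subseteq> Oset a (t *\<^sub>R u)"
        using H that by (auto simp: Oset_def inner_scaleR_right inner_commute)
    qed
    then show ?thesis using \<epsilon> by blast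
  qed
  then obtain es where es: "\<And>v. v \<noteq> 0 \<Longrightarrow> es v > 0 \<and> (\<forall>u t. dist u v < es v \<longrightarrow> t > 0 \<longrightarrow> good I J a (fs v) (t *\<^sub>R u))"
    by metis
  define S where "S = sphere (0 :: real ^ 'n) 1"
  have S0: "v \<in> S \<Longrightarrow> v \<noteq> 0" for v by (auto simp: S_def)
  have cS: "compact S" unfolding S_def by simp
  obtain F where FS: "F \<subseteq> S" and finF: "finite F" and cov: "S \<subseteq> (\<Union>v\<in>F. ball v (es v))"
  proof (rule compactE_image[OF cS, of S "\<lambda>v. ball v (es v)"])
    show "S \<subseteq> (\<Union>v\<in>S. ball v (es v))" using es S0 by force
  qed auto
  obtain e where e0: "e > 0" and eH: "\<And>x. x \<in> S \<Longrightarrow> \<exists>G \<in> (\<lambda>v. ball v (es v)) ` F. ball x e \<subseteq> G"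
    using Heine_Borel_lemma[OF cS, of "(\<lambda>v. ball v (es v)) ` F"] cov by auto
  have "\<forall>x. \<exists>v. x \<in> S \<longrightarrow> v \<in> F \<and> ball x e \<subseteq> ball v (es v)" using eH by blast
  then obtain vsel where vsel: "\<And>x. x \<in> S \<Longrightarrow> vsel x \<in> F \<and> ball x e \<subseteq> ball (vsel x) (es (vsel x))"
    by metis
  define KK where "KK = (\<Union>v\<in>F. \<Union>i. Poly_Mapping.keys (fs v i))"
  have finKK: "finite KK" unfolding KK_def using finF by simp
  define C where "C = (\<Sum>b\<in>KK. norm (expvec b))"
  have C0: "C \<ge> 0" unfolding C_def by (intro sum_nonneg) auto
  have Cb: "norm (expvec b) \<le> C" if "v \<in> F" "b \<in> Poly_Mapping.keys (fs v i)" for v i b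
    unfolding C_def by (rule member_le_sum) (use that finKK KK_def in auto)
  have fs0: "fs v i \<noteq> 0" if "v \<in> F" for v i
    using fs[of v] S0 FS that by (auto simp: ptop_def)
  have rb: "\<bar>rdeg u (fs v i)\<bar> \<le> norm u * C" if vF: "v \<in> F" for v i u
  proof -
    obtain b where b: "b \<in> Poly_Mapping.keys (fs v i)" "u \<bullet> expvec b = rdeg u (fs v i)"
      using rdeg_attained fs0 vF by blast
    have "\<bar>u \<bullet> expvec b\<bar> \<le> norm u * norm (expvec b)" by (rule Cauchy_Schwarz_ineq2)
    also have "\<dots> \<le> norm u * C" using Cb[OF vF b(1)] by (intro mult_left_mono) auto
    finally show ?thesis using b(2) by simp
  qed
  define d where "d = real CARD('n)"
  have d1: "d \<ge> 1" unfolding d_def by simp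
  define R where "R = d + (4 * d + 4 * C + 1) / e\<^sup>2"
  have Rd: "(R - d) * e\<^sup>2 = 4 * d + 4 * C + 1" unfolding R_def using e0 by simp
  have Rdpos: "R - d > 0" unfolding R_def using e0 C0 d1 by (simp add: add_pos_nonneg)
  define Pset where "Pset = {p :: int ^ 'n. R - d \<le> norm (expvec p) \<and> norm (expvec p) \<le> R + d}"
  have finP: "finite Pset"
  proof (rule finite_subset[OF _ finite_bounded_intvec[of "\<lceil>R + d\<rceil>"]])
    show "Pset \<subseteq> {p. \<forall>i. \<bar>p $ i\<bar> \<le> \<lceil>R + d\<rceil>}"
    proof safe
      fix p i assume "p \<in> Pset"
      then have "\<bar>expvec p $ i\<bar> \<le> R + d" unfolding Pset_def using component_le_norm_cart[of "expvec p" i] by simp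
      then have "real_of_int \<bar>p $ i\<bar> \<le> R + d" by (simp add: expvec_def)
      then show "\<bar>p $ i\<bar> \<le> \<lceil>R + d\<rceil>" by (metis ceiling_mono ceiling_of_int)
    qed
  qed
  define np :: "int ^ 'n \<Rightarrow> real ^ 'n" where "np p = expvec p /\<^sub>R norm (expvec p)" for p
  have pne: "expvec p \<noteq> 0" if "p \<in> Pset" for p
    using that Rdpos unfolding Pset_def by auto
  have npS: "np p \<in> S" if "p \<in> Pset" for p
    using pne[OF that] unfolding np_def S_def by simp
  define gs where "gs p = fs (vsel (np p))" for p
  have gsF: "vsel (np p) \<in> F" if "p \<in> Pset" for p using vsel npS that by blast
  define f where "f = (\<lambda>i. \<Sum>p\<in>Pset. Poly_Mapping.single p 1 * gs p i)"
  have fM: "f \<in> M" unfolding f_def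
  proof (rule submodule_sum[OF assms(1) finP], intro ballI)
    fix p assume "p \<in> Pset"
    then have "vsel (np p) \<noteq> 0" using gsF FS S0 by blast
    then show "gs p \<in> M" unfolding gs_def using fs by blast
  qed
  have main: "(\<forall>i. ptop u (f i)) \<and> (Oset a u \<union> J) \<inter> Mset u I f \<noteq> {}" if u0: "u \<noteq> 0" for u
  proof -
    define nu where "nu = norm u"
    have nu0: "nu > 0" using u0 by (simp add: nu_def)
    define uh where "uh = u /\<^sub>R nu"
    have uhS: "uh \<in> S" unfolding uh_def S_def nu_def using u0 by simp
    have u_eq: "nu *\<^sub>R uh = u" unfolding uh_def using nu0 by simp
    define p0 :: "int ^ 'n" where "p0 = (\<chi> j. round ((R *\<^sub>R uh) $ j))"
    have rnd: "norm (expvec p0 - R *\<^sub>R uh) \<le> d" unfolding p0_def d_def by (rule round_vec)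
    have nR: "norm (R *\<^sub>R uh) = R" using uhS Rdpos d1 by (simp add: S_def)
    have p0P: "p0 \<in> Pset"
    proof -
      have "\<bar>norm (expvec p0) - norm (R *\<^sub>R uh)\<bar> \<le> d"
        using norm_triangle_ineq3[of "expvec p0" "R *\<^sub>R uh"] rnd by linarith
      then show ?thesis unfolding Pset_def using nR by auto
    qed
    have up0: "u \<bullet> expvec p0 \<ge> nu * (R - d)"
    proof -
      have a1: "u \<bullet> (R *\<^sub>R uh) = R * nu"
        unfolding uh_def nu_def using u0 by (simp add: power2_norm_eq_inner[symmetric] power2_eq_square)
      have "\<bar>u \<bullet> (expvec p0 - R *\<^sub>R uh)\<bar> \<le> nu * norm (expvec p0 - R *\<^sub>R uh)"
        unfolding nu_def by (rule Cauchy_Schwarz_ineq2)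
      also have "\<dots> \<le> nu * d" using rnd nu0 by (intro mult_left_mono) auto
      finally have a2: "u \<bullet> (expvec p0 - R *\<^sub>R uh) \<ge> - (nu * d)" by linarith
      have "u \<bullet> expvec p0 = u \<bullet> (R *\<^sub>R uh) + u \<bullet> (expvec p0 - R *\<^sub>R uh)"
        by (simp add: inner_diff_right)
      then have "u \<bullet> expvec p0 = R * nu + u \<bullet> (expvec p0 - R *\<^sub>R uh)" using a1 by simp
      moreover have "nu * (R - d) = R * nu - nu * d" by (simp add: algebra_simps)
      ultimately show ?thesis using a2 by linarith
    qed
    define \<phi> where "\<phi> i p = u \<bullet> expvec p + rdeg u (gs p i)" for i p
    have gap: "dist (np p) uh < e" if pP: "p \<in> Pset" and le: "\<phi> i p0 \<le> \<phi> i p" for i p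
    proof (rule ccontr)
      assume "\<not> dist (np p) uh < e"
      then have far: "e \<le> dist (expvec p /\<^sub>R norm (expvec p)) (u /\<^sub>R norm u)"
        unfolding np_def uh_def nu_def by simp
      have g1: "u \<bullet> expvec p \<le> nu * (R + d - (R - d) * e\<^sup>2 / 2)"
        unfolding nu_def by (rule gap_ineq[OF u0 pne[OF pP] e0 _ _ far]) (use pP Pset_def in auto)
      have g2: "rdeg u (gs p i) \<le> nu * C" using rb[OF gsF[OF pP], of u i] unfolding gs_def nu_def by simp
      have g3: "rdeg u (gs p0 i) \<ge> - (nu * C)" using rb[OF gsF[OF p0P], of u i] unfolding gs_def nu_def by simp
      have "\<phi> i p \<le> nu * (R + d - (R - d) * e\<^sup>2 / 2) + nu * C" using g1 g2 by (simp add: \<phi>_def)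
      also have "\<dots> = nu * (R + d - (4 * d + 4 * C + 1) / 2 + C)" using Rd by (simp add: algebra_simps)
      also have "\<dots> < nu * (R - d) - nu * C" using nu0 by (simp add: algebra_simps)
      also have "\<dots> \<le> \<phi> i p0" using up0 g3 by (simp add: \<phi>_def)
      finally show False using le by simp
    qed
    have goodp: "good I J a (gs p) u" if pP: "p \<in> Pset" and mx: "\<forall>q\<in>Pset. \<phi> i q \<le> \<phi> i p" for i p
    proof -
      have "dist (np p) uh < e" using gap[OF pP] mx p0P by blast
      then have "uh \<in> ball (vsel (np p)) (es (vsel (np p)))" using vsel[OF npS[OF pP]] by auto
      then have "dist uh (vsel (np p)) < es (vsel (np p))" by (simp add: dist_commute)
      then have "good I J a (gs p) (nu *\<^sub>R uh)"
        using es[of "vsel (np p)"] S0 FS gsF[OF pP] nu0 unfolding gs_def by blast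
      then show ?thesis using u_eq by simp
    qed
    have ci: "f i \<noteq> 0 \<and> ptop u (f i) \<and> (\<forall>p\<in>Pset. \<phi> i p \<le> rdeg u (f i))
       \<and> (\<exists>p\<in>Pset. rdeg u (f i) = \<phi> i p)" for i
      unfolding f_def \<phi>_def
    proof (rule comb[OF finP])
      show "Pset \<noteq> {}" using p0P by auto
      show "\<forall>p\<in>Pset. gs p i \<noteq> 0" using fs0 gsF gs_def by simp
      show "\<forall>p\<in>Pset. (\<forall>q\<in>Pset. u \<bullet> expvec q + rdeg u (gs q i) \<le> u \<bullet> expvec p + rdeg u (gs p i)) \<longrightarrow> ptop u (gs p i)"
        using goodp unfolding \<phi>_def good_def by blast
    qed
    have maxex: "\<exists>p\<in>Pset. \<forall>q\<in>Pset. \<phi> i q \<le> \<phi> i p" for i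
    proof -
      have "Max (\<phi> i ` Pset) \<in> \<phi> i ` Pset" using finP p0P by (intro Max_in) auto
      then obtain p where "p \<in> Pset" "\<phi> i p = Max (\<phi> i ` Pset)" by force
      moreover have "\<forall>q\<in>Pset. \<phi> i q \<le> Max (\<phi> i ` Pset)" using finP by simp
      ultimately show ?thesis by metis
    qed
    obtain p' where p': "p' \<in> Pset" "\<forall>q\<in>Pset. \<phi> undefined q \<le> \<phi> undefined p'" using maxex by blast
    have Ine: "I \<noteq> {}" using goodp[OF p'] unfolding good_def by blast
    define Q where "Q = Pset \<times> I"
    define \<Phi> where "\<Phi> = (\<lambda>(p, i). \<phi> i p)"
    have finQ: "finite Q" unfolding Q_def using finP by simp
    have "Max (\<Phi> ` Q) \<in> \<Phi> ` Q" using finQ p0P Ine unfolding Q_def by (intro Max_in) auto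
    then obtain ps js where psQ: "(ps, js) \<in> Q" and psmax: "\<Phi> (ps, js) = Max (\<Phi> ` Q)" by force
    have allle: "\<phi> j q \<le> \<phi> js ps" if "q \<in> Pset" "j \<in> I" for q j
    proof -
      have "\<Phi> (q, j) \<le> Max (\<Phi> ` Q)" using finQ that unfolding Q_def by (intro Max_ge) auto
      then show ?thesis using psmax by (simp add: \<Phi>_def)
    qed
    have psP: "ps \<in> Pset" and isI: "js \<in> I" using psQ Q_def by auto
    have "good I J a (gs ps) u" using goodp[OF psP] allle isI by blast
    then obtain i where iO: "i \<in> Oset a u \<union> J" and iI: "i \<in> I"
      and imax: "rdeg u (gs ps i) = Max ((\<lambda>i. rdeg u (gs ps i)) ` I)"
      unfolding good_def by blast
    have "rdeg u (gs ps js) \<le> rdeg u (gs ps i)" using imax isI by simp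
    then have "\<phi> js ps \<le> \<phi> i ps" by (simp add: \<phi>_def)
    moreover have "\<phi> i ps \<le> rdeg u (f i)" using ci[of i] psP by blast
    ultimately have big: "\<phi> js ps \<le> rdeg u (f i)" by simp
    have "Max ((\<lambda>j. rdeg u (f j)) ` I) = rdeg u (f i)"
    proof (rule Max_eqI)
      show "finite ((\<lambda>j. rdeg u (f j)) ` I)" by simp
      show "y \<le> rdeg u (f i)" if yI: "y \<in> (\<lambda>j. rdeg u (f j)) ` I" for y
      proof -
        obtain j where j: "j \<in> I" "y = rdeg u (f j)" using yI by blast
        obtain q where q: "q \<in> Pset" "rdeg u (f j) = \<phi> j q" using ci[of j] by blast
        show ?thesis using allle[OF q(1) j(1)] q j big by simp
      qed
      show "rdeg u (f i) \<in> (\<lambda>j. rdeg u (f j)) ` I" using iI by blast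
    qed
    then have "i \<in> Mset u I f" using Mset_real[of I f u] ci iI by auto
    then show ?thesis using ci iO by blast
  qed
  show ?thesis
  proof (intro bexI[OF _ fM] conjI allI impI)
    fix v :: "real ^ 'n" and i assume "v \<noteq> 0"
    then show "linitv v f i \<in> Aplus" using main by (simp add: linitv_def linit_Aplus_iff)
  next
    fix v :: "real ^ 'n" assume "v \<noteq> 0"
    then show "(Oset a v \<union> J) \<inter> Mset v I f \<noteq> {}" using main by blast
  qed
qed


end
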